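(* Let $K\subset\mathbb C$ be a number field, let $\pi\in K$ be a non-square, let $L=K(\sqrt\pi)$, and let $\sigma$ be the non-trivial automorphism of $L/K$. Let $\mathfrak b$ be a nonzero ideal of $\mathcal O_K$ such that $\mathfrak b\mathcal O_L=\beta\mathcal O_L$ for some $\beta\in L$. (1) If $\beta^{\sigma-1}=-1$, then $\pi\mathcal O_K$ is the square of a (fractional) ideal of $K$. (2) If $\beta^{\sigma-1}=\zeta$, where $\zeta$ is a primitive $2^m$th root of unity with $m\ge 2$, then $\pi_m\mathcal O_K$ is the square of a (fractional) ideal of $K$.
   Context: $\mathcal O_F$ denotes the ring of integers of a number field $F$, and $\beta^{\sigma-1}$ means $\sigma(\beta)/\beta$. For $n\ge2$, $\pi_n=2+\zeta_{2^n}+\zeta_{2^n}^{-1}$ with $\zeta_{2^n}=e^{2\pi i/2^n}$. *)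

theory Defs
  imports "HOL-Analysis.Analysis" "HOL-Computational_Algebra.Polynomial"
begin

definition is_subfield :: "complex set \<Rightarrow> bool" where
  "is_subfield K \<longleftrightarrow> 0 \<in> K \<and> 1 \<in> K \<and>
     (\<forall>x\<in>K. \<forall>y\<in>K. x + y \<in> K \<and> x - y \<in> K \<and> x * y \<in> K) \<and>
     (\<forall>x\<in>K. x \<noteq> 0 \<longrightarrow> inverse x \<in> K)"

definition number_field :: "complex set \<Rightarrow> bool" where
  "number_field K \<longleftrightarrow> is_subfield K \<and>
     (\<exists>B. finite B \<and> B \<subseteq> K \<and> (\<forall>x\<in>K. \<exists>c. x = (\<Sum>b\<in>B. of_rat (c b) * b)))"

definition ring_of_integers :: "complex set \<Rightarrow> complex set" where
  "ring_of_integers F = {x \<in> F. algebraic_int x}"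

definition ideal_mult :: "complex set \<Rightarrow> complex set \<Rightarrow> complex set" where
  "ideal_mult A B = {(\<Sum>i<n. a i * b i) | (n::nat) a b. \<forall>i<n. a i \<in> A \<and> b i \<in> B}"

definition principal_ideal :: "complex \<Rightarrow> complex set \<Rightarrow> complex set" where
  "principal_ideal x R = (\<lambda>r. x * r) ` R"

definition is_ideal :: "complex set \<Rightarrow> complex set \<Rightarrow> bool" where
  "is_ideal R I \<longleftrightarrow> I \<subseteq> R \<and> 0 \<in> I \<and> (\<forall>x\<in>I. \<forall>y\<in>I. x + y \<in> I) \<and>
     (\<forall>r\<in>R. \<forall>x\<in>I. r * x \<in> I)"

definition fractional_ideal :: "complex set \<Rightarrow> complex set \<Rightarrow> bool" where
  "fractional_ideal K J \<longleftrightarrow> J \<subseteq> K \<and> 0 \<in> J \<and> J \<noteq> {0} \<and>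
     (\<forall>x\<in>J. \<forall>y\<in>J. x + y \<in> J) \<and>
     (\<forall>r\<in>ring_of_integers K. \<forall>x\<in>J. r * x \<in> J) \<and>
     (\<exists>d\<in>ring_of_integers K. d \<noteq> 0 \<and> (\<forall>x\<in>J. d * x \<in> ring_of_integers K))"

text \<open>The quadratic extension K(s), where s is a square root of pi, and its conjugation
  automorphism a + b s \<mapsto> a - b s (well defined when pi is not a square in K).\<close>
definition quad_ext :: "complex set \<Rightarrow> complex \<Rightarrow> complex set" where
  "quad_ext K s = {a + b * s | a b. a \<in> K \<and> b \<in> K}"

definition quad_conj :: "complex set \<Rightarrow> complex \<Rightarrow> complex \<Rightarrow> complex" where
  "quad_conj K s x = (THE y. \<exists>a\<in>K. \<exists>b\<in>K. x = a + b * s \<and> y = a - b * s)"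

definition pi_n :: "nat \<Rightarrow> complex" where
  "pi_n n = 2 + exp (2 * of_real pi * \<i> / 2 ^ n) + inverse (exp (2 * of_real pi * \<i> / 2 ^ n))"

definition primitive_root_of_unity :: "nat \<Rightarrow> complex \<Rightarrow> bool" where
  "primitive_root_of_unity n z \<longleftrightarrow> z ^ n = 1 \<and> (\<forall>k. 0 < k \<and> k < n \<longrightarrow> z ^ k \<noteq> 1)"

end

theory Submission
  imports Defs "Jordan_Normal_Form.Char_Poly" "HOL-Number_Theory.Cong"
begin


lemma algebraic_int_module_nat:
  fixes x :: complex and f :: "nat \<Rightarrow> complex" and a :: "nat \<Rightarrow> nat \<Rightarrow> int"
  assumes nz: "i0 < n" "f i0 \<noteq> 0"
    and eq: "\<And>i. i < n \<Longrightarrow> x * f i = (\<Sum>j<n. of_int (a i j) * f j)"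
  shows "algebraic_int x"
proof -
  define A :: "int mat" where "A = mat n n (\<lambda>(i,j). a i j)"
  define Am :: "complex mat" where "Am = map_mat of_int A"
  define v where "v = vec n f"
  have A: "A \<in> carrier_mat n n" unfolding A_def by simp
  have Am: "Am \<in> carrier_mat n n" unfolding Am_def using A by simp
  have "Am *\<^sub>v v = x \<cdot>\<^sub>v v"
  proof (rule eq_vecI)
    fix i assume "i < dim_vec (x \<cdot>\<^sub>v v)"
    hence i: "i < n" unfolding v_def by simp
    have "(Am *\<^sub>v v) $ i = (\<Sum>j = 0..<n. of_int (a i j) * f j)"
      using i unfolding Am_def A_def v_def by (simp add: scalar_prod_def)
    also have "\<dots> = x * f i" using eq[OF i] by (simp add: atLeast0LessThan)
    finally show "(Am *\<^sub>v v) $ i = (x \<cdot>\<^sub>v v) $ i" using i unfolding v_def by simp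
  qed (simp add: Am_def A_def v_def)
  moreover have "v \<in> carrier_vec n" unfolding v_def by simp
  moreover have "v \<noteq> 0\<^sub>v n"
  proof
    assume "v = 0\<^sub>v n"
    hence "v $ i0 = 0" using nz by simp
    thus False using nz unfolding v_def by simp
  qed
  ultimately have "eigenvalue Am x" unfolding eigenvalue_def eigenvector_def using Am by auto
  hence "poly (char_poly Am) x = 0" using eigenvalue_root_char_poly[OF Am] by simp
  moreover have "char_poly Am = map_poly of_int (char_poly A)"
    unfolding Am_def by (rule of_int_hom.char_poly_hom[OF A])
  moreover have "lead_coeff (char_poly A) = 1" using degree_monic_char_poly[OF A] by simp
  ultimately show ?thesis unfolding algebraic_int_altdef_ipoly by metis
qed

definition zspan :: "complex set \<Rightarrow> complex set" where
  "zspan S = {(\<Sum>h\<in>S. of_int (c h) * h) | c. True}"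

lemma zspanI: "z = (\<Sum>h\<in>S. of_int (c h) * h) \<Longrightarrow> z \<in> zspan S"
  unfolding zspan_def by blast

lemma zspan_0: "0 \<in> zspan S"
  unfolding zspan_def by (rule CollectI, rule exI[of _ "\<lambda>_. 0"]) simp

lemma zspan_add: "z \<in> zspan S \<Longrightarrow> w \<in> zspan S \<Longrightarrow> z + w \<in> zspan S"
proof -
  assume "z \<in> zspan S" "w \<in> zspan S"
  then obtain c d where "z = (\<Sum>h\<in>S. of_int (c h) * h)" "w = (\<Sum>h\<in>S. of_int (d h) * h)"
    unfolding zspan_def by blast
  hence "z + w = (\<Sum>h\<in>S. of_int (c h + d h) * h)"
    by (simp add: sum.distrib distrib_right)
  thus ?thesis by (rule zspanI)
qed

lemma zspan_int: "z \<in> zspan S \<Longrightarrow> of_int k * z \<in> zspan S"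
proof -
  assume "z \<in> zspan S"
  then obtain c where "z = (\<Sum>h\<in>S. of_int (c h) * h)"
    unfolding zspan_def by blast
  hence "of_int k * z = (\<Sum>h\<in>S. of_int (k * c h) * h)"
    by (simp add: sum_distrib_left mult.assoc)
  thus ?thesis by (rule zspanI)
qed

lemma zspan_mem: "finite S \<Longrightarrow> h \<in> S \<Longrightarrow> h \<in> zspan S"
proof -
  assume S: "finite S" "h \<in> S"
  have "(\<Sum>h'\<in>S. of_int (if h' = h then 1 else 0) * h') = (\<Sum>h'\<in>S. if h' = h then h' else 0)"
    by (rule sum.cong) auto
  also have "\<dots> = h" using S by simp
  finally show ?thesis by (metis zspanI)
qed

lemma zspan_sum: "finite I \<Longrightarrow> (\<And>i. i \<in> I \<Longrightarrow> f i \<in> zspan S) \<Longrightarrow> sum f I \<in> zspan S"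
  by (induction I rule: finite_induct) (auto intro: zspan_0 zspan_add)

lemma zspan_mult:
  assumes "finite S" "z \<in> zspan S" "\<And>g. g \<in> S \<Longrightarrow> g * w \<in> zspan T"
  shows "z * w \<in> zspan T"
proof -
  obtain c where z: "z = (\<Sum>h\<in>S. of_int (c h) * h)"
    using assms(2) unfolding zspan_def by blast
  have "z * w = (\<Sum>h\<in>S. of_int (c h) * (h * w))"
    unfolding z by (simp add: sum_distrib_right mult.assoc)
  also have "\<dots> \<in> zspan T"
    by (rule zspan_sum[OF assms(1)]) (intro zspan_int assms(3))
  finally show ?thesis .
qed

lemma algebraic_int_module:
  fixes x :: complex
  assumes S: "finite S" "g \<in> S" "g \<noteq> 0" and cl: "\<And>h. h \<in> S \<Longrightarrow> x * h \<in> zspan S"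
  shows "algebraic_int x"
proof -
  obtain f where f: "bij_betw f {0..<card S} S" using ex_bij_betw_nat_finite[OF S(1)] by blast
  define n where "n = card S"
  have f': "bij_betw f {..<n} S" using f unfolding n_def by (simp add: atLeast0LessThan)
  have "\<forall>i. \<exists>c. i < n \<longrightarrow> x * f i = (\<Sum>h\<in>S. of_int (c h) * h)"
  proof
    fix i show "\<exists>c. i < n \<longrightarrow> x * f i = (\<Sum>h\<in>S. of_int (c h) * h)"
    proof (cases "i < n")
      case True
      hence "f i \<in> S" using f' by (auto simp: bij_betw_def)
      thus ?thesis using cl[of "f i"] unfolding zspan_def by blast
    qed auto
  qed
  then obtain c where c: "\<And>i. i < n \<Longrightarrow> x * f i = (\<Sum>h\<in>S. of_int (c i h) * h)" by metis
  obtain i0 where i0: "i0 < n" "f i0 = g" using f' S(2) by (auto simp: bij_betw_def)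
  show ?thesis
  proof (rule algebraic_int_module_nat[of i0 n f x "\<lambda>i j. c i (f j)"])
    fix i assume "i < n"
    have "x * f i = (\<Sum>h\<in>S. of_int (c i h) * h)" using c[OF \<open>i < n\<close>] .
    also have "\<dots> = (\<Sum>j<n. of_int (c i (f j)) * f j)"
      by (rule sum.reindex_bij_betw[OF f', symmetric])
    finally show "x * f i = (\<Sum>j<n. of_int (c i (f j)) * f j)" .
  qed (use i0 S in auto)
qed

lemma algebraic_int_module_ex:
  fixes x :: complex
  assumes "algebraic_int x"
  shows "\<exists>S. finite S \<and> 1 \<in> S \<and> (\<forall>h\<in>S. x * h \<in> zspan S)"
proof -
  obtain p where p: "lead_coeff p = 1" "\<forall>i. coeff p i \<in> \<int>" "poly p x = 0"
    using assms by (auto simp: algebraic_int.simps)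
  define n where "n = degree p"
  have "n > 0"
  proof (rule ccontr)
    assume "\<not> n > 0"
    hence "n = 0" by simp
    hence "p = [:1:]" using p(1) unfolding n_def by (metis degree_0_id)
    thus False using p(3) by simp
  qed
  define S where "S = (\<lambda>i. x ^ i) ` {..<n}"
  have finS: "finite S" unfolding S_def by simp
  have "1 \<in> S" unfolding S_def using \<open>n > 0\<close> by (auto intro: image_eqI[of _ _ 0])
  moreover have "\<forall>h\<in>S. x * h \<in> zspan S"
  proof
    fix h assume "h \<in> S"
    then obtain i where i: "i < n" "h = x ^ i" unfolding S_def by auto
    show "x * h \<in> zspan S"
    proof (cases "Suc i < n")
      case True
      hence "x ^ Suc i \<in> S" unfolding S_def by blast
      thus ?thesis using i by (simp add: zspan_mem[OF finS])
    next
      case False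
      hence ni: "Suc i = n" using i by simp
      have "poly p x = (\<Sum>k\<le>n. coeff p k * x ^ k)" unfolding n_def by (simp add: poly_altdef)
      also have "\<dots> = (\<Sum>k<n. coeff p k * x ^ k) + x ^ n"
        using p(1) unfolding n_def by (simp add: lessThan_Suc_atMost[symmetric])
      finally have "x ^ n = (\<Sum>k<n. - coeff p k * x ^ k)" using p(3)
        by (simp add: sum_negf add_eq_0_iff)
      moreover have "(\<Sum>k<n. - coeff p k * x ^ k) \<in> zspan S"
      proof (rule zspan_sum)
        fix k assume k: "k \<in> {..<n}"
        obtain m where "coeff p k = of_int m" using p(2) by (meson Ints_cases)
        hence "- coeff p k * x ^ k = of_int (- m) * x ^ k" by simp
        also have "\<dots> \<in> zspan S" using k by (intro zspan_int zspan_mem[OF finS]) (auto simp: S_def)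
        finally show "- coeff p k * x ^ k \<in> zspan S" .
      qed simp
      moreover have "x * h = x ^ n" using i ni by (metis power_Suc)
      ultimately show ?thesis by simp
    qed
  qed
  ultimately show ?thesis using finS by blast
qed

lemma algebraic_int_add_mult:
  fixes x y :: complex
  assumes "algebraic_int x" "algebraic_int y"
  shows "algebraic_int (x + y)" "algebraic_int (x * y)"
proof -
  obtain S where S: "finite S" "1 \<in> S" "\<forall>h\<in>S. x * h \<in> zspan S"
    using algebraic_int_module_ex[OF assms(1)] by blast
  obtain T where T: "finite T" "1 \<in> T" "\<forall>h\<in>T. y * h \<in> zspan T"
    using algebraic_int_module_ex[OF assms(2)] by blast
  define U where "U = (\<lambda>(g,h). g * h) ` (S \<times> T)"
  have finU: "finite U" unfolding U_def using S T by simp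
  have memU: "\<And>g h. g \<in> S \<Longrightarrow> h \<in> T \<Longrightarrow> g * h \<in> U" unfolding U_def by force
  have oneU: "1 \<in> U" unfolding U_def using S T by (auto intro: image_eqI[of _ _ "(1,1)"])
  have xU: "\<forall>u\<in>U. x * u \<in> zspan U"
  proof
    fix u assume "u \<in> U"
    then obtain g h where gh: "g \<in> S" "h \<in> T" "u = g * h" unfolding U_def by auto
    have "(x * g) * h \<in> zspan U"
      by (rule zspan_mult[OF S(1)]) (use S gh memU in \<open>auto intro!: zspan_mem[OF finU]\<close>)
    thus "x * u \<in> zspan U" using gh by (simp add: mult.assoc)
  qed
  have yU: "\<forall>u\<in>U. y * u \<in> zspan U"
  proof
    fix u assume "u \<in> U"
    then obtain g h where gh: "g \<in> S" "h \<in> T" "u = g * h" unfolding U_def by auto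
    have "(y * h) * g \<in> zspan U"
      by (rule zspan_mult[OF T(1)]) (use T gh memU in \<open>auto intro!: zspan_mem[OF finU] simp: mult.commute[of _ g]\<close>)
    thus "y * u \<in> zspan U" using gh by (simp add: mult_ac)
  qed
  show "algebraic_int (x + y)"
    by (rule algebraic_int_module[OF finU oneU one_neq_zero])
       (use xU yU in \<open>auto simp: distrib_right intro: zspan_add\<close>)
  show "algebraic_int (x * y)"
  proof (rule algebraic_int_module[OF finU oneU one_neq_zero])
    fix u assume u: "u \<in> U"
    have "(y * u) * x \<in> zspan U"
      by (rule zspan_mult[OF finU]) (use yU u xU in \<open>auto simp: mult.commute\<close>)
    thus "x * y * u \<in> zspan U" by (simp add: mult_ac)
  qed
qed




lemma algebraic_int_sum: "(\<And>i. i \<in> I \<Longrightarrow> algebraic_int (f i :: complex)) \<Longrightarrow> algebraic_int (sum f I)"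
  by (induction I rule: infinite_finite_induct) (auto intro: algebraic_int_add_mult)

lemma algebraic_int_pow: "algebraic_int (x :: complex) \<Longrightarrow> algebraic_int (x ^ n)"
  by (induction n) (auto intro: algebraic_int_add_mult)

lemma algebraic_int_diff: "algebraic_int (x :: complex) \<Longrightarrow> algebraic_int y \<Longrightarrow> algebraic_int (x - y)"
  using algebraic_int_add_mult(1)[of x "-y"] by simp

lemma algebraic_int_root_unity:
  fixes z :: complex assumes "z ^ N = 1" "N > 0" shows "algebraic_int z"
proof (rule algebraic_int_root[of 1 "monom 1 N"])
  show "poly (monom 1 N) z = 1" using assms by (simp add: poly_monom)
qed (use assms in \<open>auto simp: coeff_monom degree_monom_eq\<close>)

lemma geom_odd: fixes z :: complex assumes "odd j"
  shows "1 + z ^ j = (1 + z) * (\<Sum>i<j. (- z) ^ i)"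
proof -
  have "1 - (- z) ^ j = (1 - (- z)) * (\<Sum>i<j. (- z) ^ i)" by (rule one_diff_power_eq)
  thus ?thesis using assms by simp
qed

lemma root_facts:
  fixes \<zeta> :: complex
  assumes m: "m \<ge> 2" and z1: "\<zeta> ^ (2 ^ m) = 1" and prim: "\<And>k. 0 < k \<Longrightarrow> k < 2 ^ m \<Longrightarrow> \<zeta> ^ k \<noteq> 1"
  defines "\<omega> \<equiv> exp (2 * of_real pi * \<i> / 2 ^ m)"
  shows "\<exists>k j. odd k \<and> odd j \<and> \<zeta> = \<omega> ^ k \<and> \<omega> = \<zeta> ^ j \<and> \<omega> ^ (2 ^ m) = 1"
proof -
  obtain m1 where m1: "m = Suc m1" "m1 \<ge> 1" using m by (cases m) auto
  define N :: nat where "N = 2 ^ m"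
  have N2: "N = 2 * 2 ^ m1" unfolding N_def m1 by simp
  have N: "N > 0" unfolding N_def by simp
  have N4: "N \<ge> 4" unfolding N_def using power_increasing[OF m, of "2::nat"] by simp
  have \<omega>: "\<omega> = cis (2 * pi / real N)"
    unfolding \<omega>_def cis_conv_exp N_def by (simp add: field_simps)
  have "\<zeta> \<in> {z. z ^ N = 1}" using z1 unfolding N_def by simp
  then obtain k where k: "k < N" "\<zeta> = cis (2 * pi * real k / real N)"
    using Complex.bij_betw_roots_unity[OF N] unfolding bij_betw_def by auto
  have \<zeta>k: "\<zeta> = \<omega> ^ k" unfolding k(2) \<omega> Complex.DeMoivre by (simp add: field_simps)
  have \<omega>N: "\<omega> ^ N = 1" unfolding \<omega> Complex.DeMoivre using N by simp
  have oddk: "odd k"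
  proof
    assume "even k"
    then obtain k' where k': "k = 2 * k'" by blast
    have "\<zeta> ^ (2 ^ m1) = \<omega> ^ (k * 2 ^ m1)" unfolding \<zeta>k by (simp add: power_mult)
    also have "k * 2 ^ m1 = N * k'" unfolding k' N2 by simp
    also have "\<omega> ^ (N * k') = 1" unfolding power_mult \<omega>N by simp
    finally have "\<zeta> ^ (2 ^ m1) = 1" .
    moreover have "0 < (2::nat) ^ m1" "(2::nat) ^ m1 < 2 ^ m" using m1 by auto
    ultimately show False using prim by blast
  qed
  have "coprime k N" unfolding N_def using oddk by simp
  then obtain j where j: "[k * j = Suc 0] (mod N)" using cong_solve_coprime_nat by blast
  hence "k * j mod N = 1" using N4 unfolding cong_def by simp
  hence kj: "k * j = N * (k * j div N) + 1" by (metis div_mult_mod_eq add.commute mult.commute)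
  have "\<zeta> ^ j = \<omega> ^ (k * j)" unfolding \<zeta>k by (simp add: power_mult)
  also have "\<dots> = \<omega>" by (subst kj) (simp add: power_add power_mult \<omega>N)
  finally have \<omega>j: "\<omega> = \<zeta> ^ j" by simp
  have "even (N * (k * j div N))" unfolding N2 by simp
  hence "odd (k * j)" by (subst kj) simp
  hence "odd j" by simp
  show ?thesis using oddk \<open>odd j\<close> \<zeta>k \<omega>j \<omega>N unfolding N_def by blast
qed


lemma ratio_algint:
  fixes z :: complex
  assumes zN: "z ^ N = 1" "N > 0" and j: "odd j" and z1: "1 + z \<noteq> 0"
  shows "algebraic_int ((2 + z ^ j + inverse z ^ j) / (2 + z + inverse z))"
proof -
  have z0: "z \<noteq> 0"
  proof
    assume "z = 0" thus False using zN zero_power[OF zN(2), where 'a=complex] by simp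
  qed
  define w where "w = inverse z"
  have wN: "w ^ N = 1" unfolding w_def using zN by (simp add: power_inverse)
  have w1: "1 + w \<noteq> 0"
  proof
    assume "1 + w = 0"
    hence "w = -1" by (simp add: add_eq_0_iff)
    hence "z = -1" unfolding w_def by (metis inverse_inverse_eq inverse_minus_eq inverse_1)
    thus False using z1 by simp
  qed
  have zw: "z * w = 1" unfolding w_def using z0 by simp
  define A where "A = (\<Sum>i<j. (- z) ^ i)"
  define B where "B = (\<Sum>i<j. (- w) ^ i)"
  have den: "2 + z + w = (1 + z) * (1 + w)" using zw by (simp add: algebra_simps)
  have "(1 + z) * (1 + w) \<noteq> 0" using z1 w1 by simp
  have "2 + z ^ j + w ^ j = (1 + z ^ j) * (1 + w ^ j)"
    using zw by (simp add: algebra_simps power_mult_distrib[symmetric])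
  also have "\<dots> = ((1 + z) * (1 + w)) * (A * B)"
    unfolding A_def B_def geom_odd[OF j, of z] geom_odd[OF j, of w] by (simp add: mult_ac)
  finally have num: "2 + z ^ j + w ^ j = ((1 + z) * (1 + w)) * (A * B)" .
  have eq: "(2 + z ^ j + w ^ j) / (2 + z + w) = A * B"
    unfolding num den using \<open>(1 + z) * (1 + w) \<noteq> 0\<close> by simp
  have "algebraic_int (- z)" "algebraic_int (- w)"
    using algebraic_int_root_unity[OF zN] algebraic_int_root_unity[OF wN zN(2)] by auto
  hence "algebraic_int (A * B)" unfolding A_def B_def
    by (intro algebraic_int_add_mult(2) algebraic_int_sum algebraic_int_pow)
  thus ?thesis using eq unfolding w_def by simp
qed

locale qf =
  fixes K :: "complex set" and p s :: complex
  assumes K: "number_field K" and pK: "p \<in> K" and nonsq: "\<not> (\<exists>x\<in>K. x ^ 2 = p)"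
    and s: "s ^ 2 = p"
begin

abbreviation "L \<equiv> quad_ext K s"
abbreviation "OK \<equiv> ring_of_integers K"
abbreviation "OL \<equiv> ring_of_integers L"
abbreviation "cj \<equiv> quad_conj K s"

lemma sf: "is_subfield K" using K unfolding number_field_def by simp

lemma K0: "0 \<in> K" and K1: "1 \<in> K" using sf unfolding is_subfield_def by auto
lemma Kadd: "x \<in> K \<Longrightarrow> y \<in> K \<Longrightarrow> x + y \<in> K" using sf unfolding is_subfield_def by auto
lemma Kdiff: "x \<in> K \<Longrightarrow> y \<in> K \<Longrightarrow> x - y \<in> K" using sf unfolding is_subfield_def by auto
lemma Kmult: "x \<in> K \<Longrightarrow> y \<in> K \<Longrightarrow> x * y \<in> K" using sf unfolding is_subfield_def by auto
lemma Kinv: "x \<in> K \<Longrightarrow> inverse x \<in> K"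
  using sf K0 unfolding is_subfield_def by (cases "x = 0") auto
lemma Kdiv: "x \<in> K \<Longrightarrow> y \<in> K \<Longrightarrow> x / y \<in> K"
  by (simp add: divide_inverse Kmult Kinv)
lemma Kuminus: "x \<in> K \<Longrightarrow> - x \<in> K" using Kdiff[OF K0, of x] by simp
lemma Knat: "of_nat n \<in> K"
  by (induction n) (auto intro: K0 K1 Kadd)
lemma K2: "2 \<in> K" using Knat[of 2] by simp
lemma Kint: "of_int n \<in> K"
  by (cases n rule: int_cases) (auto intro: Knat Kuminus simp del: of_nat_Suc)
lemma KInts: "x \<in> \<int> \<Longrightarrow> x \<in> K" by (auto elim!: Ints_cases intro: Kint)
lemma Kpow: "x \<in> K \<Longrightarrow> x ^ n \<in> K" by (induction n) (auto intro: K1 Kmult)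
lemma Ksum: "(\<And>i. i \<in> I \<Longrightarrow> f i \<in> K) \<Longrightarrow> sum f I \<in> K"
  by (induction I rule: infinite_finite_induct) (auto intro: K0 Kadd)

lemma s_notin: "s \<notin> K" using nonsq s by blast
lemma s_nz: "s \<noteq> 0" using s_notin K0 by auto
lemma ss: "s * s = p" using s by (simp add: power2_eq_square)
lemma p_nz: "p \<noteq> 0" using ss s_nz by auto

lemma uniq:
  assumes "a \<in> K" "b \<in> K" "a' \<in> K" "b' \<in> K" "a + b * s = a' + b' * s"
  shows "a = a' \<and> b = b'"
proof (cases "b = b'")
  case True thus ?thesis using assms by simp
next
  case False
  have "a - a' = (b' - b) * s" using assms(5) by (simp add: algebra_simps)
  hence "s = (a - a') / (b' - b)" using False by (simp add: field_simps)
  hence "s \<in> K" using assms by (simp add: Kdiv Kdiff)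
  thus ?thesis using s_notin by simp
qed

lemma cj_eq: assumes "a \<in> K" "b \<in> K" shows "cj (a + b * s) = a - b * s"
  unfolding quad_conj_def
proof (rule the_equality)
  show "\<exists>a'\<in>K. \<exists>b'\<in>K. a + b * s = a' + b' * s \<and> a - b * s = a' - b' * s" using assms by blast
next
  fix y assume "\<exists>a'\<in>K. \<exists>b'\<in>K. a + b * s = a' + b' * s \<and> y = a' - b' * s"
  then obtain a' b' where "a' \<in> K" "b' \<in> K" "a + b * s = a' + b' * s" "y = a' - b' * s" by blast
  thus "y = a - b * s" using uniq[OF assms \<open>a' \<in> K\<close> \<open>b' \<in> K\<close>] by simp
qed

lemma Lmem: "a \<in> K \<Longrightarrow> b \<in> K \<Longrightarrow> a + b * s \<in> L" unfolding quad_ext_def by blast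
lemma LE: assumes "x \<in> L" obtains a b where "a \<in> K" "b \<in> K" "x = a + b * s"
  using assms unfolding quad_ext_def by blast
lemma KL: "x \<in> K \<Longrightarrow> x \<in> L" using Lmem[of x 0] K0 by simp
lemma sL: "s \<in> L" using Lmem[of 0 1] K0 K1 by simp

lemma Ladd: "x \<in> L \<Longrightarrow> y \<in> L \<Longrightarrow> x + y \<in> L \<and> cj (x + y) = cj x + cj y"
proof -
  assume "x \<in> L" "y \<in> L"
  then obtain a b c d where abcd: "a \<in> K" "b \<in> K" "c \<in> K" "d \<in> K" "x = a + b * s" "y = c + d * s"
    by (metis LE)
  have e: "x + y = (a + c) + (b + d) * s" using abcd by (simp add: algebra_simps)
  have K2: "a + c \<in> K" "b + d \<in> K" using abcd by (auto intro: Kadd)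
  have "cj (x + y) = (a + c) - (b + d) * s" unfolding e by (rule cj_eq[OF K2])
  also have "\<dots> = (a - b * s) + (c - d * s)" by (simp add: algebra_simps)
  also have "\<dots> = cj x + cj y" using abcd cj_eq by auto
  finally have "cj (x + y) = cj x + cj y" .
  moreover have "x + y \<in> L" by (subst e) (rule Lmem[OF K2])
  ultimately show ?thesis by blast
qed

lemma Lmult: "x \<in> L \<Longrightarrow> y \<in> L \<Longrightarrow> x * y \<in> L \<and> cj (x * y) = cj x * cj y"
proof -
  assume "x \<in> L" "y \<in> L"
  then obtain a b c d where abcd: "a \<in> K" "b \<in> K" "c \<in> K" "d \<in> K" "x = a + b * s" "y = c + d * s"
    by (metis LE)
  have e: "x * y = (a * c + b * d * p) + (a * d + b * c) * s" using abcd ss[symmetric]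
    by (simp add: algebra_simps)
  have K1: "a * c + b * d * p \<in> K" "a * d + b * c \<in> K" using abcd pK by (auto intro!: Kadd Kmult)
  have "cj x * cj y = (a * c + b * d * p) - (a * d + b * c) * s"
    using abcd ss[symmetric] by (simp add: cj_eq algebra_simps)
  thus ?thesis unfolding e using K1 by (simp add: Lmem cj_eq)
qed

lemma cj_K: "x \<in> K \<Longrightarrow> cj x = x" using cj_eq[of x 0] K0 by simp
lemma cj_L: "x \<in> L \<Longrightarrow> cj x \<in> L"
  by (metis LE Lmem Kuminus cj_eq diff_conv_add_uminus mult_minus_left)
lemma cj_cj: "x \<in> L \<Longrightarrow> cj (cj x) = x"
proof -
  assume "x \<in> L"
  then obtain a b where ab: "a \<in> K" "b \<in> K" "x = a + b * s" by (metis LE)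
  have "cj x = a - b * s" using ab cj_eq by simp
  also have "\<dots> = a + (- b) * s" by simp
  finally have cx: "cj x = a + (- b) * s" .
  have "cj (cj x) = a - (- b) * s" unfolding cx by (rule cj_eq) (use ab Kuminus in auto)
  thus ?thesis using ab by simp
qed
lemma cj_s: "cj s = - s" using cj_eq[of 0 1] K0 K1 by simp
lemma cj_fix: assumes "x \<in> L" "cj x = x" shows "x \<in> K"
proof -
  obtain a b where ab: "a \<in> K" "b \<in> K" "x = a + b * s" using assms(1) by (metis LE)
  have "a - b * s = a + b * s" using assms(2) ab cj_eq by simp
  hence "b * s = 0" by simp
  hence "b = 0" using s_nz by simp
  thus ?thesis using ab by simp
qed
lemma cj_0: "cj 0 = 0" using cj_K K0 by simp
lemma cj_nz: "x \<in> L \<Longrightarrow> x \<noteq> 0 \<Longrightarrow> cj x \<noteq> 0" using cj_cj cj_0 by metis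

lemma Linv: assumes "x \<in> L" shows "inverse x \<in> L \<and> cj (inverse x) = inverse (cj x)"
proof (cases "x = 0")
  case True thus ?thesis using KL K0 cj_0 by simp
next
  case False
  have cx: "cj x \<in> L" "cj x \<noteq> 0" using assms False cj_L cj_nz by auto
  have N: "x * cj x \<in> L" "cj (x * cj x) = x * cj x"
    using Lmult[OF assms cx(1)] cj_cj[OF assms] by (auto simp: mult.commute)
  hence NK: "x * cj x \<in> K" by (rule cj_fix)
  have eq: "inverse x = cj x * inverse (x * cj x)" using cx False by (simp add: field_simps)
  have iL: "inverse x \<in> L" by (subst eq) (use Lmult[OF cx(1) KL[OF Kinv[OF NK]]] in blast)
  have "cj x * cj (inverse x) = cj (x * inverse x)" using Lmult[OF assms iL] by simp
  also have "\<dots> = 1" using False cj_K K1 by simp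
  finally have "cj (inverse x) = inverse (cj x)" using cx by (simp add: field_simps)
  thus ?thesis using iL by simp
qed

lemma Ldiv: "x \<in> L \<Longrightarrow> y \<in> L \<Longrightarrow> x / y \<in> L \<and> cj (x / y) = cj x / cj y"
  using Lmult[of x "inverse y"] Linv[of y] by (simp add: divide_inverse)

lemma Luminus: "x \<in> L \<Longrightarrow> - x \<in> L \<and> cj (- x) = - cj x"
  using Lmult[of "-1" x] KL[OF Kuminus[OF K1]] cj_K[OF Kuminus[OF K1]] by simp

lemma Ldiff: "x \<in> L \<Longrightarrow> y \<in> L \<Longrightarrow> x - y \<in> L \<and> cj (x - y) = cj x - cj y"
  using Ladd[of x "-y"] Luminus[of y] by simp

lemma Lsum: "finite I \<Longrightarrow> (\<And>i. i \<in> I \<Longrightarrow> f i \<in> L) \<Longrightarrow> sum f I \<in> L \<and> cj (sum f I) = (\<Sum>i\<in>I. cj (f i))"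
  by (induction I rule: finite_induct) (auto simp: KL K0 cj_0 Ladd)

lemma Lpow: "x \<in> L \<Longrightarrow> x ^ n \<in> L \<and> cj (x ^ n) = cj x ^ n"
  by (induction n) (auto simp: KL K1 cj_K Lmult)

lemma cj_algint: assumes "x \<in> L" "algebraic_int x" shows "algebraic_int (cj x)"
proof -
  obtain P where P: "lead_coeff P = 1" "\<forall>i. coeff P i \<in> \<int>" "poly P x = 0"
    using assms(2) by (auto simp: algebraic_int.simps)
  have cK: "\<And>i. coeff P i \<in> K" using P(2) KInts by blast
  have "poly P (cj x) = (\<Sum>i\<le>degree P. coeff P i * cj x ^ i)" by (simp add: poly_altdef)
  also have "\<dots> = (\<Sum>i\<le>degree P. cj (coeff P i * x ^ i))"
  proof (rule sum.cong)
    fix i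
    have "x ^ i \<in> L" "cj (x ^ i) = cj x ^ i" using Lpow[OF assms(1)] by auto
    thus "coeff P i * cj x ^ i = cj (coeff P i * x ^ i)"
      using Lmult[OF KL[OF cK], of "x ^ i" i] cj_K[OF cK] by simp
  qed simp
  also have "\<dots> = cj (\<Sum>i\<le>degree P. coeff P i * x ^ i)"
    by (rule Lsum[THEN conjunct2, symmetric]) (use Lmult KL cK Lpow assms(1) in auto)
  also have "\<dots> = 0" using P(3) by (simp add: poly_altdef cj_0)
  finally show ?thesis using P by (intro algebraic_int.intros[of P]) auto
qed


lemma OK_iff: "x \<in> OK \<longleftrightarrow> x \<in> K \<and> algebraic_int x" unfolding ring_of_integers_def by simp
lemma OL_iff: "x \<in> OL \<longleftrightarrow> x \<in> L \<and> algebraic_int x" unfolding ring_of_integers_def by simp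
lemma OK_OL: "x \<in> OK \<Longrightarrow> x \<in> OL" using OK_iff OL_iff KL by blast

lemma trace_OK: assumes "y \<in> OL" "z \<in> OL" shows "y * cj z + z * cj y \<in> OK"
proof -
  have L: "y \<in> L" "z \<in> L" "cj y \<in> L" "cj z \<in> L" using assms cj_L OL_iff by auto
  have A: "algebraic_int (y * cj z + z * cj y)"
    using assms cj_algint L by (auto simp: OL_iff intro!: algebraic_int_add_mult)
  have "cj (y * cj z + z * cj y) = cj y * z + cj z * y"
    using Ladd[OF Lmult[OF L(1,4), THEN conjunct1] Lmult[OF L(2,3), THEN conjunct1]]
      Lmult[OF L(1,4)] Lmult[OF L(2,3)] cj_cj L by simp
  moreover have "y * cj z + z * cj y \<in> L"
    using Ladd[OF Lmult[OF L(1,4), THEN conjunct1] Lmult[OF L(2,3), THEN conjunct1]] by blast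
  ultimately have "y * cj z + z * cj y \<in> K" by (intro cj_fix) (auto simp: mult.commute add.commute)
  thus ?thesis using A OK_iff by blast
qed

lemma norm_OK: assumes "y \<in> OL" shows "y * cj y \<in> OK"
proof -
  have L: "y \<in> L" "cj y \<in> L" using assms cj_L OL_iff by auto
  have A: "algebraic_int (y * cj y)"
    using assms cj_algint L by (auto simp: OL_iff intro!: algebraic_int_add_mult)
  have "cj (y * cj y) = y * cj y" using Lmult[OF L] cj_cj L by (simp add: mult.commute)
  hence "y * cj y \<in> K" using Lmult[OF L] by (intro cj_fix) auto
  thus ?thesis using A OK_iff by blast
qed

lemma common_denom:
  fixes f :: "'a \<Rightarrow> rat"
  shows "finite A \<Longrightarrow> \<exists>D::int. D > 0 \<and> (\<forall>a\<in>A. \<exists>n::int. of_int D * f a = of_int n)"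
proof (induction A rule: finite_induct)
  case empty show ?case by (rule exI[of _ 1]) simp
next
  case (insert a A)
  then obtain D where D: "D > 0" "\<forall>a\<in>A. \<exists>n::int. of_int D * f a = of_int n" by blast
  obtain num den where q: "quotient_of (f a) = (num, den)" by fastforce
  have den: "den > 0" using quotient_of_denom_pos[OF q] .
  have fa: "f a = of_int num / of_int den" using quotient_of_div[OF q] .
  show ?case
  proof (rule exI[of _ "D * den"], intro conjI ballI)
    show "D * den > 0" using D den by simp
    fix a' assume "a' \<in> insert a A"
    thus "\<exists>n::int. of_int (D * den) * f a' = of_int n"
    proof
      assume "a' = a"
      thus ?thesis using den by (intro exI[of _ "D * num"]) (simp add: fa)
    next
      assume "a' \<in> A"
      then obtain n where "of_int D * f a' = of_int n" using D by blast
      moreover have "of_int (D * den) * f a' = of_int den * (of_int D * f a')" by (simp add: algebra_simps)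
      ultimately show ?thesis by (intro exI[of _ "den * n"]) simp
    qed
  qed
qed

lemma denom: assumes "x \<in> K" shows "\<exists>d. d \<in> OK \<and> d \<noteq> 0 \<and> algebraic_int (d * x)"
proof -
  obtain B where B: "finite B" "B \<subseteq> K" "\<forall>x\<in>K. \<exists>c. x = (\<Sum>b\<in>B. of_rat (c b) * b)"
    using K unfolding number_field_def by blast
  have "\<forall>b. \<exists>c. b \<in> B \<longrightarrow> x * b = (\<Sum>b'\<in>B. of_rat (c b') * b')"
    using B assms Kmult by blast
  then obtain C where C: "\<And>b. b \<in> B \<Longrightarrow> x * b = (\<Sum>b'\<in>B. of_rat (C b b') * b')" by metis
  obtain D :: int where D: "D > 0" "\<forall>a\<in>B \<times> B. \<exists>n::int. of_int D * (\<lambda>(b,b'). C b b') a = of_int n"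
    using common_denom[of "B \<times> B" "\<lambda>(b,b'). C b b'"] B(1) by blast
  define e where "e b b' = (SOME n::int. of_int D * C b b' = of_int n)" for b b'
  have e: "of_int D * C b b' = of_int (e b b')" if "b \<in> B" "b' \<in> B" for b b'
    using D(2) that unfolding e_def by (metis (mono_tags, lifting) case_prod_conv mem_Sigma_iff someI_ex)
  have zs: "(of_int D * x) * b \<in> zspan B" if b: "b \<in> B" for b
  proof (rule zspanI)
    have "(of_int D * x) * b = (\<Sum>b'\<in>B. of_int D * of_rat (C b b') * b')"
      using C[OF b] by (simp add: sum_distrib_left mult.assoc)
    also have "\<dots> = (\<Sum>b'\<in>B. of_int (e b b') * b')"
    proof (rule sum.cong)
      fix b' assume b': "b' \<in> B"
      have "of_int D * of_rat (C b b') = (of_rat (of_int D * C b b') :: complex)"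
        by (simp add: of_rat_mult)
      also have "\<dots> = of_int (e b b')" using e[OF b b'] by simp
      finally show "of_int D * of_rat (C b b') * b' = of_int (e b b') * b'" by simp
    qed simp
    finally show "(of_int D * x) * b = (\<Sum>b'\<in>B. of_int (e b b') * b')" .
  qed
  have "\<exists>b\<in>B. b \<noteq> 0"
  proof (rule ccontr)
    assume "\<not> (\<exists>b\<in>B. b \<noteq> 0)"
    moreover obtain c where "(1::complex) = (\<Sum>b\<in>B. of_rat (c b) * b)" using B(3) K1 by blast
    ultimately show False by (metis (no_types, lifting) mult_zero_right sum.neutral zero_neq_one)
  qed
  then obtain b where "b \<in> B" "b \<noteq> 0" by blast
  hence "algebraic_int (of_int D * x)" using algebraic_int_module[OF B(1)] zs by blast
  moreover have "of_int D \<in> OK" using Kint OK_iff by simp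
  ultimately show ?thesis using D(1) by (intro exI[of _ "of_int D"]) auto
qed


lemma normK: assumes "x \<in> L" shows "x * cj x \<in> K"
proof -
  have cx: "cj x \<in> L" using cj_L[OF assms] .
  have m: "x * cj x \<in> L" "cj (x * cj x) = cj x * cj (cj x)" using Lmult[OF assms cx] by auto
  have "cj (x * cj x) = x * cj x" unfolding m(2) cj_cj[OF assms] by (rule mult.commute)
  thus ?thesis using m(1) cj_fix by blast
qed

lemma OKmult: assumes "x \<in> OK" "y \<in> OK" shows "x * y \<in> OK"
proof -
  have "x \<in> K" "y \<in> K" "algebraic_int x" "algebraic_int y" using assms OK_iff by auto
  thus ?thesis using OK_iff Kmult algebraic_int_add_mult(2) by blast
qed

end

lemma sum_split_add: "(\<Sum>i<n+(m::nat). f i) = (\<Sum>i<n. f i) + (\<Sum>i<m. (f (n + i) :: 'a :: comm_monoid_add))"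
  by (induction m) (auto simp: add.assoc)

lemma imI: "(\<forall>i<(n::nat). a i \<in> A \<and> b i \<in> B) \<Longrightarrow> z = (\<Sum>i<n. a i * b i) \<Longrightarrow> z \<in> ideal_mult A B"
  unfolding ideal_mult_def by blast
lemma imE: assumes "z \<in> ideal_mult A B"
  obtains n :: nat and a b where "\<forall>i<n. a i \<in> A \<and> b i \<in> B" "z = (\<Sum>i<n. a i * b i)"
  using assms unfolding ideal_mult_def by blast

lemma im_0: "0 \<in> ideal_mult A B" by (rule imI[of 0]) auto

lemma im_prod: "a \<in> A \<Longrightarrow> b \<in> B \<Longrightarrow> a * b \<in> ideal_mult A B"
  by (rule imI[of 1 "\<lambda>_. a" _ "\<lambda>_. b"]) auto

lemma im_add: assumes "z \<in> ideal_mult A B" "w \<in> ideal_mult A B" shows "z + w \<in> ideal_mult A B"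
proof -
  obtain n :: nat and a b where 1: "\<forall>i<n. a i \<in> A \<and> b i \<in> B" "z = (\<Sum>i<n. a i * b i)" using assms(1) by (rule imE)
  obtain m :: nat and a' b' where 2: "\<forall>i<m. a' i \<in> A \<and> b' i \<in> B" "w = (\<Sum>i<m. a' i * b' i)" using assms(2) by (rule imE)
  define a'' where "a'' i = (if i < n then a i else a' (i - n))" for i
  define b'' where "b'' i = (if i < n then b i else b' (i - n))" for i
  show ?thesis
  proof (rule imI[of "n + m" a'' _ b''])
    show "\<forall>i<n + m. a'' i \<in> A \<and> b'' i \<in> B" using 1 2 unfolding a''_def b''_def by auto
    have "(\<Sum>i<n + m. a'' i * b'' i) = (\<Sum>i<n. a'' i * b'' i) + (\<Sum>i<m. a'' (n + i) * b'' (n + i))"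
      by (rule sum_split_add)
    also have "\<dots> = z + w" using 1 2 unfolding a''_def b''_def by simp
    finally show "z + w = (\<Sum>i<n + m. a'' i * b'' i)" by simp
  qed
qed

lemma im_sum: "(\<And>i. i \<in> I \<Longrightarrow> f i \<in> ideal_mult A B) \<Longrightarrow> sum f I \<in> ideal_mult A B"
  by (induction I rule: infinite_finite_induct) (auto intro: im_0 im_add)

lemma im_scale: assumes "\<forall>r\<in>R. \<forall>x\<in>A. r * x \<in> A" "r \<in> R" "z \<in> ideal_mult A B"
  shows "r * z \<in> ideal_mult A B"
proof -
  obtain n :: nat and a b where 1: "\<forall>i<n. a i \<in> A \<and> b i \<in> B" "z = (\<Sum>i<n. a i * b i)" using assms(3) by (rule imE)
  show ?thesis
    by (rule imI[of n "\<lambda>i. r * a i" _ b]) (use 1 assms in \<open>auto simp: sum_distrib_left mult.assoc\<close>)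
qed

lemma quad_identity:
  "(\<Sum>i<n. \<Sum>j<n. P i j) = (\<Sum>i<n. P i i + (\<Sum>j<i. P i j + P j i)) "
  for P :: "nat \<Rightarrow> nat \<Rightarrow> 'a :: comm_monoid_add"
proof (induction n)
  case (Suc n)
  have "(\<Sum>i<Suc n. \<Sum>j<Suc n. P i j) = (\<Sum>i<n. \<Sum>j<n. P i j) + ((\<Sum>i<n. P i n) + (\<Sum>j<n. P n j) + P n n)"
    by (simp add: sum.distrib add_ac)
  also have "\<dots> = (\<Sum>i<Suc n. P i i + (\<Sum>j<i. P i j + P j i))"
    using Suc by (simp add: sum.distrib add_ac)
  finally show ?case .
qed simp

locale qf2 = qf +
  fixes bb :: "complex set" and \<beta> :: complex
  assumes b_ideal: "is_ideal (ring_of_integers K) bb" and b_nz: "bb \<noteq> {0}"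
    and \<beta>L: "\<beta> \<in> quad_ext K s"
    and ext: "ideal_mult bb (ring_of_integers (quad_ext K s))
              = principal_ideal \<beta> (ring_of_integers (quad_ext K s))"
begin

lemma bb_OK: "b \<in> bb \<Longrightarrow> b \<in> OK" using b_ideal unfolding is_ideal_def by blast
lemma bb_K: "b \<in> bb \<Longrightarrow> b \<in> K" using bb_OK OK_iff by blast
lemma bb_0: "0 \<in> bb" using b_ideal unfolding is_ideal_def by blast
lemma bb_add: "b \<in> bb \<Longrightarrow> b' \<in> bb \<Longrightarrow> b + b' \<in> bb" using b_ideal unfolding is_ideal_def by blast
lemma bb_scale: "r \<in> OK \<Longrightarrow> b \<in> bb \<Longrightarrow> r * b \<in> bb" using b_ideal unfolding is_ideal_def by blast
lemma bb_nz: "\<exists>b\<in>bb. b \<noteq> 0" using b_nz bb_0 by blast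

lemma one_OL: "1 \<in> OL" using OL_iff KL K1 by simp

lemma E1: assumes "b \<in> bb" shows "\<exists>y\<in>OL. b = \<beta> * y"
proof -
  have "b \<in> ideal_mult bb OL" using im_prod[OF assms one_OL] by simp
  thus ?thesis using ext unfolding principal_ideal_def by auto
qed

lemma E2: "\<exists>(n::nat) a y. (\<forall>i<n. a i \<in> bb \<and> y i \<in> OL) \<and> \<beta> = (\<Sum>i<n. a i * y i)"
proof -
  have "\<beta> \<in> principal_ideal \<beta> OL" unfolding principal_ideal_def using one_OL by force
  hence "\<beta> \<in> ideal_mult bb OL" using ext by simp
  thus ?thesis by (elim imE) blast
qed

lemma \<beta>_nz: "\<beta> \<noteq> 0"
proof
  assume "\<beta> = 0"
  obtain b where b: "b \<in> bb" "b \<noteq> 0" using bb_nz by blast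
  obtain y where "b = \<beta> * y" using E1[OF b(1)] by blast
  thus False using b \<open>\<beta> = 0\<close> by simp
qed

lemma G:
  assumes c: "c \<in> K" "c \<noteq> 0" and t: "t \<in> K" "t \<noteq> 0"
    and i: "algebraic_int ((c * \<beta>) ^ 2 / t)"
    and ii: "u \<in> OK" "t = u * ((c * \<beta>) * cj (c * \<beta>))"
    and iii: "d \<in> OK" "d \<noteq> 0" "algebraic_int (d * (c * \<beta>))"
  shows "\<exists>J. fractional_ideal K J \<and> ideal_mult J J = principal_ideal t OK"
proof -
  define J where "J = (\<lambda>b. c * b) ` bb"
  have JK: "x \<in> J \<Longrightarrow> x \<in> K" for x unfolding J_def using c bb_K Kmult by auto
  have Jscale: "\<forall>r\<in>OK. \<forall>x\<in>J. r * x \<in> J"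
  proof (intro ballI)
    fix r x assume "r \<in> OK" "x \<in> J"
    then obtain b where "b \<in> bb" "x = c * b" unfolding J_def by auto
    thus "r * x \<in> J" unfolding J_def using bb_scale[OF \<open>r \<in> OK\<close>] by (auto simp: mult.left_commute)
  qed
  have Jd: "\<exists>y\<in>OL. x = (c * \<beta>) * y" if xJ: "x \<in> J" for x
  proof -
    from xJ obtain b where "b \<in> bb" "x = c * b" unfolding J_def by auto
    thus ?thesis using E1 by (auto simp: mult.assoc)
  qed
  have frac: "fractional_ideal K J"
    unfolding fractional_ideal_def
  proof (intro conjI)
    show "J \<subseteq> K" using JK by blast
    show "0 \<in> J" unfolding J_def using bb_0 by force
    show "J \<noteq> {0}"
    proof
      assume J0: "J = {0}"
      obtain b where b: "b \<in> bb" "b \<noteq> 0" using bb_nz by blast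
      hence "c * b \<in> J" unfolding J_def by blast
      thus False using J0 b c by simp
    qed
    show "\<forall>x\<in>J. \<forall>y\<in>J. x + y \<in> J"
      unfolding J_def using bb_add by (auto simp: distrib_left[symmetric])
    show "\<forall>r\<in>OK. \<forall>x\<in>J. r * x \<in> J" by (rule Jscale)
    show "\<exists>d\<in>OK. d \<noteq> 0 \<and> (\<forall>x\<in>J. d * x \<in> OK)"
    proof (intro bexI conjI ballI)
      fix x assume "x \<in> J"
      then obtain y where y: "y \<in> OL" "x = (c * \<beta>) * y" using Jd by blast
      have "algebraic_int (d * x)"
        using iii(3) y OL_iff algebraic_int_add_mult(2)[of "d * (c * \<beta>)" y] by (simp add: mult.assoc)
      moreover have "d * x \<in> K" using iii(1) \<open>x \<in> J\<close> JK OK_iff Kmult by blast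
      ultimately show "d * x \<in> OK" using OK_iff by blast
    qed (use iii in auto)
  qed
  have sub1: "ideal_mult J J \<subseteq> principal_ideal t OK"
  proof
    fix z assume "z \<in> ideal_mult J J"
    then obtain n :: nat and A B where AB: "\<forall>i<n. A i \<in> J \<and> B i \<in> J" "z = (\<Sum>i<n. A i * B i)" by (rule imE)
    have each: "algebraic_int (A i * B i / t)" if iN: "i < n" for i
    proof -
      obtain y where y: "y \<in> OL" "A i = (c * \<beta>) * y" using Jd AB iN by blast
      obtain y' where y': "y' \<in> OL" "B i = (c * \<beta>) * y'" using Jd AB iN by blast
      have eq: "A i * B i / t = ((c * \<beta>) ^ 2 / t) * (y * y')"
        unfolding y(2) y'(2) power2_eq_square using t by (simp add: field_simps)
      have "algebraic_int (y * y')" using y y' OL_iff algebraic_int_add_mult by blast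
      hence "algebraic_int (((c * \<beta>) ^ 2 / t) * (y * y'))"
        using i algebraic_int_add_mult(2) by blast
      thus ?thesis by (subst eq)
    qed
    have zt: "z / t = (\<Sum>i<n. A i * B i / t)" using AB by (simp add: sum_divide_distrib)
    have "algebraic_int (z / t)" unfolding zt by (rule algebraic_int_sum) (use each in auto)
    moreover have "z \<in> K" using AB JK by (auto intro!: Ksum Kmult)
    hence "z / t \<in> K" using t Kdiv by blast
    ultimately have "z / t \<in> OK" using OK_iff by blast
    moreover have "z = t * (z / t)" using t by simp
    ultimately show "z \<in> principal_ideal t OK" unfolding principal_ideal_def by (rule rev_image_eqI)
  qed
  have tJJ: "t \<in> ideal_mult J J"
  proof -
    obtain n :: nat and a y where ay: "\<forall>i<n. a i \<in> bb \<and> y i \<in> OL" "\<beta> = (\<Sum>i<n. a i * y i)" using E2 by blast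
    define \<alpha> where "\<alpha> i = c * a i" for i
    have \<alpha>J: "\<alpha> i \<in> J" if "i < n" for i using ay that unfolding \<alpha>_def J_def by blast
    have \<alpha>K: "\<alpha> i \<in> K" if "i < n" for i using \<alpha>J JK that by blast
    have yL: "y i \<in> L" if "i < n" for i using ay that OL_iff by blast
    have d1: "c * \<beta> = (\<Sum>i<n. \<alpha> i * y i)" unfolding ay(2) \<alpha>_def by (simp add: sum_distrib_left mult.assoc)
    have "cj (c * \<beta>) = (\<Sum>i<n. cj (\<alpha> i * y i))"
      unfolding d1 by (rule Lsum[THEN conjunct2]) (use Lmult KL \<alpha>K yL in auto)
    also have "\<dots> = (\<Sum>i<n. \<alpha> i * cj (y i))"
      by (rule sum.cong) (use Lmult KL \<alpha>K yL cj_K in auto)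
    finally have d2: "cj (c * \<beta>) = (\<Sum>i<n. \<alpha> i * cj (y i))" .
    define P where "P i j = \<alpha> i * \<alpha> j * (y i * cj (y j))" for i j
    have "(c * \<beta>) * cj (c * \<beta>) = (\<Sum>i<n. \<Sum>j<n. P i j)"
    proof -
      have "(c * \<beta>) * cj (c * \<beta>) = (\<Sum>i<n. \<alpha> i * y i) * (\<Sum>j<n. \<alpha> j * cj (y j))"
        by (subst d2, subst d1) (rule refl)
      also have "\<dots> = (\<Sum>i<n. \<Sum>j<n. (\<alpha> i * y i) * (\<alpha> j * cj (y j)))" by (rule sum_product)
      also have "\<dots> = (\<Sum>i<n. \<Sum>j<n. P i j)" unfolding P_def by (simp add: mult_ac)
      finally show ?thesis .
    qed
    also have "\<dots> = (\<Sum>i<n. P i i + (\<Sum>j<i. P i j + P j i))" by (rule quad_identity)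
    finally have "t = u * (\<Sum>i<n. P i i + (\<Sum>j<i. P i j + P j i))" using ii by simp
    also have "\<dots> = (\<Sum>i<n. u * P i i + (\<Sum>j<i. u * (P i j + P j i)))"
      by (simp add: sum_distrib_left distrib_left)
    also have "\<dots> \<in> ideal_mult J J"
    proof (rule im_sum, rule im_add)
      fix i assume i: "i \<in> {..<n}"
      have yi: "y i \<in> OL" using ay i by simp
      have N: "u * (y i * cj (y i)) \<in> OK" by (rule OKmult[OF ii(1) norm_OK[OF yi]])
      have "u * P i i = ((u * (y i * cj (y i))) * \<alpha> i) * \<alpha> i" unfolding P_def by (simp add: mult_ac)
      also have "\<dots> \<in> ideal_mult J J" using Jscale N \<alpha>J[of i] i by (intro im_prod) auto
      finally show "u * P i i \<in> ideal_mult J J" .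
      show "(\<Sum>j<i. u * (P i j + P j i)) \<in> ideal_mult J J"
      proof (rule im_sum)
        fix j assume j: "j \<in> {..<i}"
        have yj: "y j \<in> OL" using ay i j by simp
        have T: "u * (y i * cj (y j) + y j * cj (y i)) \<in> OK" by (rule OKmult[OF ii(1) trace_OK[OF yi yj]])
        have "u * (P i j + P j i) = ((u * (y i * cj (y j) + y j * cj (y i))) * \<alpha> i) * \<alpha> j"
          unfolding P_def by (simp add: distrib_left distrib_right mult_ac)
        also have "\<dots> \<in> ideal_mult J J" using Jscale T \<alpha>J[of i] \<alpha>J[of j] i j by (intro im_prod) auto
        finally show "u * (P i j + P j i) \<in> ideal_mult J J" .
      qed
    qed
    finally show ?thesis .
  qed
  have sub2: "principal_ideal t OK \<subseteq> ideal_mult J J"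
  proof
    fix z assume "z \<in> principal_ideal t OK"
    then obtain r where "r \<in> OK" "z = t * r" unfolding principal_ideal_def by auto
    thus "z \<in> ideal_mult J J" using im_scale[OF Jscale _ tJJ, of r] by (simp add: mult.commute)
  qed
  have "ideal_mult J J = principal_ideal t OK" by (rule subset_antisym[OF sub1 sub2])
  thus ?thesis using frac by blast
qed


lemma case1:
  assumes q: "cj \<beta> / \<beta> = -1"
  shows "\<exists>J. fractional_ideal K J \<and> ideal_mult J J = principal_ideal p OK"
proof -
  have "cj \<beta> = (cj \<beta> / \<beta>) * \<beta>" using \<beta>_nz by simp
  hence cb: "cj \<beta> = - \<beta>" unfolding q by simp
  obtain a b where ab: "a \<in> K" "b \<in> K" "\<beta> = a + b * s" using \<beta>L by (metis LE)
  have "cj \<beta> = a - b * s" unfolding ab(3) by (rule cj_eq[OF ab(1,2)])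
  hence eq: "a - b * s = - (a + b * s)" using cb ab(3) by simp
  have "a = ((a - b * s) + (a + b * s)) / 2" by simp
  also have "\<dots> = 0" unfolding eq by simp
  finally have a0: "a = 0" .
  have \<beta>bs: "\<beta> = b * s" using ab a0 by simp
  have b0: "b \<noteq> 0" using \<beta>_nz \<beta>bs by auto
  define c where "c = inverse b"
  have cK: "c \<in> K" "c \<noteq> 0" unfolding c_def using Kinv ab b0 by auto
  have cbs: "c * \<beta> = s" unfolding c_def \<beta>bs using b0 by simp
  obtain d where d: "d \<in> OK" "d \<noteq> 0" "algebraic_int (d * p)" using denom[OF pK] by blast
  have "algebraic_int (d * (d * p))" using d OK_iff algebraic_int_add_mult(2) by blast
  hence ds: "algebraic_int (d * s)"
  proof (rule algebraic_int_root[of _ "monom 1 2"])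
    show "poly (monom 1 2) (d * s) = d * (d * p)" using s by (simp add: poly_monom power2_eq_square mult_ac)
  qed (auto simp: coeff_monom degree_monom_eq)
  have m1: "-1 \<in> OK" using OK_iff Kuminus[OF K1] by simp
  have e2: "p = -1 * ((c * \<beta>) * cj (c * \<beta>))" unfolding cbs cj_s using ss by simp
  have e1: "algebraic_int ((c * \<beta>) ^ 2 / p)" unfolding cbs s using p_nz by simp
  have e3: "algebraic_int (d * (c * \<beta>))" unfolding cbs by (rule ds)
  show ?thesis by (rule G[OF cK pK p_nz e1 m1 e2 d(1,2) e3])
qed

lemma cheb: assumes z0: "z \<noteq> 0" and zK: "z + inverse z \<in> K"
  shows "z ^ n + inverse z ^ n \<in> K"
proof -
  define X where "X n = z ^ n + inverse z ^ n" for n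
  have rec: "X (Suc (Suc n)) = X 1 * X (Suc n) - X n" for n
  proof -
    have a: "z * inverse z ^ Suc n = inverse z ^ n" using z0 by (simp add: mult.assoc[symmetric])
    have b: "inverse z * z ^ Suc n = z ^ n" using z0 by (simp add: mult.assoc[symmetric])
    have "X 1 * X (Suc n) = z * z ^ Suc n + z * inverse z ^ Suc n + inverse z * z ^ Suc n + inverse z * inverse z ^ Suc n"
      unfolding X_def by (simp add: algebra_simps)
    also have "\<dots> = X (Suc (Suc n)) + X n" unfolding a b X_def by simp
    finally show ?thesis by simp
  qed
  have "X n \<in> K \<and> X (Suc n) \<in> K"
  proof (induction n)
    case 0
    have "X 0 = of_nat 2" unfolding X_def by simp
    thus ?case using K2 zK unfolding X_def by simp
  next
    case (Suc n)
    have "X 1 \<in> K" using zK unfolding X_def by simp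
    thus ?case using Suc rec[of n] Kdiff Kmult by simp
  qed
  thus ?thesis unfolding X_def by simp
qed

lemma case2:
  assumes m: "m \<ge> 2" and prim: "primitive_root_of_unity (2 ^ m) \<zeta>" and q: "cj \<beta> / \<beta> = \<zeta>"
  shows "\<exists>J. fractional_ideal K J \<and> ideal_mult J J = principal_ideal (pi_n m) OK"
proof -
  define N :: nat where "N = 2 ^ m"
  have N: "N > 0" unfolding N_def by simp
  have N4: "N \<ge> 4" unfolding N_def using power_increasing[OF m, of "2::nat"] by simp
  have z1: "\<zeta> ^ N = 1" and pr: "\<And>k. 0 < k \<Longrightarrow> k < N \<Longrightarrow> \<zeta> ^ k \<noteq> 1"
    using prim unfolding primitive_root_of_unity_def N_def by auto
  define \<omega> where "\<omega> = exp (2 * of_real pi * \<i> / 2 ^ m)"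
  obtain k j where kj: "odd k" "odd j" "\<zeta> = \<omega> ^ k" "\<omega> = \<zeta> ^ j" "\<omega> ^ N = 1"
    using root_facts[OF m] prim unfolding primitive_root_of_unity_def \<omega>_def N_def by blast
  have \<zeta>0: "\<zeta> \<noteq> 0"
  proof
    assume "\<zeta> = 0" thus False using z1 zero_power[OF N, where 'a=complex] by simp
  qed
  have \<zeta>m1: "\<zeta> \<noteq> -1"
  proof
    assume "\<zeta> = -1"
    hence "\<zeta> ^ 2 = 1" by simp
    thus False using pr[of 2] N4 by simp
  qed
  hence \<zeta>1: "1 + \<zeta> \<noteq> 0" by (metis add.commute add_eq_0_iff)
  have "cj \<beta> = (cj \<beta> / \<beta>) * \<beta>" using \<beta>_nz by simp
  hence cb: "cj \<beta> = \<zeta> * \<beta>" unfolding q by simp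
  have cbL: "cj \<beta> \<in> L" using cj_L[OF \<beta>L] .
  have \<zeta>L: "\<zeta> \<in> L" using Ldiv[OF cbL \<beta>L] q by simp
  have "cj \<zeta> = cj (cj \<beta>) / cj \<beta>" using Ldiv[OF cbL \<beta>L] q by simp
  also have "\<dots> = \<beta> / cj \<beta>" by (simp only: cj_cj[OF \<beta>L])
  also have "\<dots> = inverse \<zeta>" unfolding cb using \<beta>_nz \<zeta>0 by (simp add: field_simps)
  finally have cj\<zeta>: "cj \<zeta> = inverse \<zeta>" .
  define iz where "iz = inverse \<zeta>"
  have izL: "iz \<in> L" and cjiz: "cj iz = \<zeta>" unfolding iz_def using Linv[OF \<zeta>L] cj\<zeta> by auto
  have ziz: "\<zeta> * iz = 1" unfolding iz_def using \<zeta>0 by simp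
  have iz0: "iz \<noteq> 0" using ziz by auto
  have izm1: "iz \<noteq> -1" using \<zeta>m1 unfolding iz_def by (metis inverse_inverse_eq inverse_minus_eq inverse_1)
  define \<delta> where "\<delta> = 1 + iz"
  have \<delta>L: "\<delta> \<in> L" and cj\<delta>: "cj \<delta> = 1 + \<zeta>"
    unfolding \<delta>_def using Ladd[OF KL[OF K1] izL] cj_K[OF K1] cjiz by auto
  have \<delta>0: "\<delta> \<noteq> 0" unfolding \<delta>_def using izm1 by (metis add.commute add_eq_0_iff)
  define c where "c = \<delta> / \<beta>"
  have cL: "c \<in> L" and cjc: "cj c = (1 + \<zeta>) / (\<zeta> * \<beta>)"
    unfolding c_def using Ldiv[OF \<delta>L \<beta>L] cj\<delta> cb by auto
  have "(1 + \<zeta>) / (\<zeta> * \<beta>) = c" unfolding c_def \<delta>_def iz_def using \<zeta>0 \<beta>_nz by (simp add: field_simps)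
  hence "cj c = c" using cjc by simp
  hence cK: "c \<in> K" using cL cj_fix by blast
  have c0: "c \<noteq> 0" unfolding c_def using \<delta>0 \<beta>_nz by simp
  have cb\<delta>: "c * \<beta> = \<delta>" unfolding c_def using \<beta>_nz by simp
  define t' where "t' = \<delta> * cj \<delta>"
  have t'K: "t' \<in> K" unfolding t'_def by (rule normK[OF \<delta>L])
  have "t' = \<delta> * (1 + \<zeta>)" unfolding t'_def cj\<delta> ..
  also have "\<dots> = 2 + \<zeta> + iz" unfolding \<delta>_def using ziz by (simp add: algebra_simps)
  finally have t'e: "t' = 2 + \<zeta> + iz" .
  have t'0: "t' \<noteq> 0" unfolding t'_def cj\<delta> using \<delta>0 \<zeta>1 by simp
  have sK: "\<zeta> + iz \<in> K" using Kdiff[OF t'K K2] t'e by simp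
  have XK: "\<zeta> ^ n + iz ^ n \<in> K" for n using cheb[OF \<zeta>0] sK unfolding iz_def by blast
  define t where "t = pi_n m"
  have te: "t = 2 + \<omega> + inverse \<omega>" unfolding t_def pi_n_def \<omega>_def by simp
  have te2: "t = 2 + (\<zeta> ^ j + iz ^ j)" unfolding te kj(4) iz_def by (simp add: power_inverse)
  have tK: "t \<in> K" unfolding te2 using Kadd[OF K2 XK[of j]] by simp
  have \<omega>1: "1 + \<omega> \<noteq> 0"
  proof
    assume "1 + \<omega> = 0"
    hence "\<omega> = -1" by (metis add.commute add_eq_0_iff)
    hence "\<zeta> = -1" using kj(1,3) by simp
    thus False using \<zeta>m1 by simp
  qed
  have r1: "algebraic_int ((2 + \<zeta> ^ j + inverse \<zeta> ^ j) / (2 + \<zeta> + inverse \<zeta>))"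
    by (rule ratio_algint[OF z1 N kj(2) \<zeta>1])
  have r1': "algebraic_int (t / t')" using r1 unfolding te2 t'e iz_def by (simp add: add.assoc)
  have r2: "algebraic_int ((2 + \<omega> ^ k + inverse \<omega> ^ k) / (2 + \<omega> + inverse \<omega>))"
    by (rule ratio_algint[OF kj(5) N kj(1) \<omega>1])
  have r2': "algebraic_int (t' / t)" using r2 unfolding te t'e iz_def kj(3) by (simp add: power_inverse)
  have \<omega>0: "\<omega> \<noteq> 0" unfolding \<omega>_def by simp
  have t0: "t \<noteq> 0"
  proof
    assume "t = 0"
    have "2 + \<omega> + inverse \<omega> = (1 + \<omega>) * (1 + inverse \<omega>)"
      using \<omega>0 by (simp add: algebra_simps)
    moreover have "1 + inverse \<omega> \<noteq> 0"
    proof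
      assume "1 + inverse \<omega> = 0"
      hence "inverse \<omega> = -1" by (metis add.commute add_eq_0_iff)
      hence "\<omega> = -1" by (metis inverse_inverse_eq inverse_minus_eq inverse_1)
      thus False using \<omega>1 by simp
    qed
    ultimately show False using \<open>t = 0\<close> \<omega>1 te by simp
  qed
  define u where "u = t / t'"
  have uOK: "u \<in> OK" unfolding u_def using OK_iff Kdiv[OF tK t'K] r1' by blast
  have e2: "t = u * ((c * \<beta>) * cj (c * \<beta>))" unfolding cb\<delta> u_def t'_def[symmetric] using t'0 by simp
  have eqx: "(c * \<beta>) ^ 2 / t = iz * (t' / t)" unfolding cb\<delta> t'e \<delta>_def
    using ziz t0 by (simp add: power2_eq_square field_simps)
  have aiz: "algebraic_int iz"
    using algebraic_int_root_unity[of iz N] z1 N unfolding iz_def by (simp add: power_inverse)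
  have e1: "algebraic_int ((c * \<beta>) ^ 2 / t)" unfolding eqx by (rule algebraic_int_add_mult(2)[OF aiz r2'])
  have e3: "algebraic_int (1 * (c * \<beta>))" unfolding cb\<delta> \<delta>_def
    using aiz algebraic_int_add_mult(1)[of 1 iz] by simp
  have one: "1 \<in> OK" using OK_iff K1 by simp
  show ?thesis using G[OF cK c0 tK t0 e1 uOK e2 one _ e3] unfolding t_def by simp
qed

end

theorem lemma1:
  fixes K :: "complex set" and p s \<beta> :: complex and \<bb> :: "complex set"
  assumes K: "number_field K"
    and pK: "p \<in> K" and nonsq: "\<not> (\<exists>x\<in>K. x ^ 2 = p)"
    and s: "s ^ 2 = p"
    and b_ideal: "is_ideal (ring_of_integers K) \<bb>" and b_nz: "\<bb> \<noteq> {0}"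
    and \<beta>L: "\<beta> \<in> quad_ext K s"
    and ext: "ideal_mult \<bb> (ring_of_integers (quad_ext K s))
              = principal_ideal \<beta> (ring_of_integers (quad_ext K s))"
  shows "(quad_conj K s \<beta> / \<beta> = -1 \<longrightarrow>
            (\<exists>J. fractional_ideal K J \<and> ideal_mult J J = principal_ideal p (ring_of_integers K)))
       \<and> (\<forall>\<zeta> m. m \<ge> 2 \<and> primitive_root_of_unity (2 ^ m) \<zeta> \<and> quad_conj K s \<beta> / \<beta> = \<zeta> \<longrightarrow>
            (\<exists>J. fractional_ideal K J \<and> ideal_mult J J = principal_ideal (pi_n m) (ring_of_integers K)))"
proof -
  interpret q: qf2 K p s \<bb> \<beta>
    by unfold_locales (fact K pK nonsq s b_ideal b_nz \<beta>L ext)+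
  show ?thesis using q.case1 q.case2 by blast
qed


end
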